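(* Let $k \ge 1$ and $k \le m < 2k$. The number of Grassmannian involutions of $[m]$ that avoid $\operatorname{id}_k=12\cdots k$ is $\left\lfloor \frac{(2k-m)^2}{4}\right\rfloor$.
   Context: A permutation is Grassmannian if it has at most one descent; a Grassmannian involution is a Grassmannian permutation $\pi$ with $\pi^{-1}=\pi$. A permutation avoids $12\cdots k$ if it has no increasing subsequence of length $k$. *)

theory Defs
  imports "HOL-Combinatorics.Permutations"
begin

text \<open>Permutations of [m] = {1..m} are functions p with p permutes {1..m}.\<close>

definition descents :: "nat \<Rightarrow> (nat \<Rightarrow> nat) \<Rightarrow> nat set" where
  "descents m p = {i. 1 \<le> i \<and> i < m \<and> p i > p (Suc i)}"

definition grassmannian :: "nat \<Rightarrow> (nat \<Rightarrow> nat) \<Rightarrow> bool" where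
  "grassmannian m p \<longleftrightarrow> card (descents m p) \<le> 1"

definition involution :: "(nat \<Rightarrow> nat) \<Rightarrow> bool" where
  "involution p \<longleftrightarrow> inv p = p"

definition contains_incr :: "nat \<Rightarrow> nat \<Rightarrow> (nat \<Rightarrow> nat) \<Rightarrow> bool" where
  "contains_incr m k p \<longleftrightarrow>
     (\<exists>f :: nat \<Rightarrow> nat. f ` {..<k} \<subseteq> {1..m} \<and> strict_mono_on {..<k} f
        \<and> strict_mono_on {..<k} (p \<circ> f))"

definition avoids_incr :: "nat \<Rightarrow> nat \<Rightarrow> (nat \<Rightarrow> nat) \<Rightarrow> bool" where
  "avoids_incr m k p \<longleftrightarrow> \<not> contains_incr m k p"

end

theory Submission
  imports Defs
begin

definition sw :: "nat \<Rightarrow> nat \<Rightarrow> nat \<Rightarrow> nat" where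
  "sw a b i = (if a < i \<and> i \<le> a + b then i + b
     else if a + b < i \<and> i \<le> a + 2*b then i - b else i)"

lemma sw_sw: "sw a b (sw a b i) = i"
  unfolding sw_def by auto

lemma sw_out: "a + 2*b \<le> m \<Longrightarrow> i \<notin> {1..m} \<Longrightarrow> sw a b i = i"
  unfolding sw_def by auto

lemma sw_permutes: assumes "a + 2*b \<le> m" shows "sw a b permutes {1..m}"
  unfolding permutes_def
proof (intro conjI allI impI)
  fix x assume "x \<notin> {1..m}" then show "sw a b x = x" using sw_out assms by blast
next
  fix y show "\<exists>!x. sw a b x = y"
  proof (rule ex1I[of _ "sw a b y"])
    show "sw a b (sw a b y) = y" by (rule sw_sw)
    fix x assume "sw a b x = y" then show "x = sw a b y" using sw_sw by metis
  qed
qed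

lemma sw_inv: "inv (sw a b) = sw a b"
  by (rule inv_equality) (simp_all add: sw_sw)

lemma sw_grass: "grassmannian m (sw a b)"
proof -
  have "descents m (sw a b) \<subseteq> {a+b}"
    unfolding descents_def sw_def by (auto split: if_splits)
  then have "card (descents m (sw a b)) \<le> card {a+b}" by (rule card_mono[rotated]) simp
  then show ?thesis unfolding grassmannian_def by simp
qed

lemma sw_avoid:
  assumes ab: "a + 2*b \<le> m" and c: "contains_incr m k (sw a b)"
  shows "k + b \<le> m"
proof -
  obtain f where f1: "f ` {..<k} \<subseteq> {1..m}" and f2: "strict_mono_on {..<k} f"
    and f3: "strict_mono_on {..<k} (sw a b \<circ> f)"
    using c unfolding contains_incr_def by blast
  define A where "A = {a+1..a+b}"
  define B where "B = {a+b+1..a+2*b}"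
  have notboth: False if "i < k" "j < k" "f i \<in> A" "f j \<in> B" for i j
  proof -
    have "f i < f j" using that A_def B_def by auto
    then have "i < j" using f2 that
      by (metis lessThan_iff linorder_neqE_nat order_less_asym strict_mono_onD)
    then have "(sw a b \<circ> f) i < (sw a b \<circ> f) j" using strict_mono_onD[OF f3, of i j] that by simp
    then show False using that unfolding A_def B_def sw_def by auto
  qed
  have inj: "inj_on f {..<k}" using f2 by (rule strict_mono_on_imp_inj_on)
  have ck: "card (f ` {..<k}) = k" using card_image[OF inj] by simp
  have "f ` {..<k} \<subseteq> {1..m} - A \<or> f ` {..<k} \<subseteq> {1..m} - B"
    using notboth f1 by blast
  moreover have "card ({1..m} - A) = m - b"
    using ab by (subst card_Diff_subset) (auto simp: A_def)
  moreover have "card ({1..m} - B) = m - b"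
    using ab by (subst card_Diff_subset) (auto simp: B_def)
  ultimately have "k \<le> m - b" using ck card_mono
    by (metis finite_Diff finite_atLeastAtMost)
  then show ?thesis using ab by simp
qed

lemma sw_contains:
  assumes "k + b \<le> m" "a + 2*b \<le> m"
  shows "contains_incr m k (sw a b)"
  unfolding contains_incr_def
proof (intro exI conjI)
  let ?f = "\<lambda>i::nat. if i < a + b then i + 1 else i + 1 + b"
  show "?f ` {..<k} \<subseteq> {1..m}" using assms by auto
  show "strict_mono_on {..<k} ?f" by (auto intro!: strict_mono_onI)
  show "strict_mono_on {..<k} (sw a b \<circ> ?f)" by (auto intro!: strict_mono_onI simp: sw_def)
qed

definition incr_on :: "nat \<Rightarrow> nat \<Rightarrow> (nat \<Rightarrow> nat) \<Rightarrow> bool" where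
  "incr_on l u f \<longleftrightarrow> (\<forall>i j. l \<le> i \<longrightarrow> i < j \<longrightarrow> j \<le> u \<longrightarrow> f i < f j)"

lemma incr_onI:
  assumes "\<And>i. l \<le> i \<Longrightarrow> i < u \<Longrightarrow> f i < f (Suc i)"
  shows "incr_on l u f"
  unfolding incr_on_def
proof (intro allI impI)
  fix i j assume "l \<le> i" "i < j" "j \<le> u"
  then show "f i < f j"
  proof (induction j)
    case 0 then show ?case by simp
  next
    case (Suc j)
    show ?case
    proof (cases "i = j")
      case True then show ?thesis using assms Suc.prems by simp
    next
      case False
      then have "f i < f j" using Suc by simp
      also have "f j < f (Suc j)" using assms Suc.prems False by simp
      finally show ?thesis .
    qed
  qed
qed

lemma incr_lower:
  assumes "incr_on l u f" "\<And>i. l \<le> i \<Longrightarrow> i \<le> u \<Longrightarrow> lo \<le> f i" "l \<le> i" "i \<le> u"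
  shows "lo + (i - l) \<le> f i"
  using assms(3,4)
proof (induction i)
  case 0 then show ?case using assms(2) by simp
next
  case (Suc i)
  show ?case
  proof (cases "l = Suc i")
    case True then show ?thesis using assms(2) Suc.prems by simp
  next
    case False
    then have "l \<le> i" using Suc.prems by simp
    then have "lo + (i - l) \<le> f i" using Suc by simp
    moreover have "f i < f (Suc i)" using assms(1) \<open>l \<le> i\<close> Suc.prems unfolding incr_on_def by simp
    ultimately show ?thesis using \<open>l \<le> i\<close> by linarith
  qed
qed

lemma incr_upper:
  assumes "incr_on l u f" "\<And>i. l \<le> i \<Longrightarrow> i \<le> u \<Longrightarrow> f i \<le> hi" "l \<le> i" "i \<le> u"
  shows "f i + (u - i) \<le> hi"
  using assms(3,4)
proof (induction "u - i" arbitrary: i)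
  case 0 then have "i = u" by simp
  then show ?case using assms(2) 0 by simp
next
  case (Suc n)
  then have "i < u" by simp
  have "f (Suc i) + (u - Suc i) \<le> hi" using Suc.hyps(1)[of "Suc i"] Suc.hyps(2) Suc.prems \<open>i<u\<close> by simp
  moreover have "f i < f (Suc i)" using assms(1) Suc.prems \<open>i < u\<close> unfolding incr_on_def by simp
  ultimately show ?case using \<open>i<u\<close> by linarith
qed

lemma char:
  assumes pm: "p permutes {1..m}" and g: "grassmannian m p" and iv: "involution p"
  shows "\<exists>a b. a + 2*b \<le> m \<and> p = sw a b"
proof -
  have pp: "p (p x) = x" for x
  proof -
    have "inv p (p x) = x" using permutes_inj[OF pm] by (simp add: inv_f_f)
    then show ?thesis using iv unfolding involution_def by simp
  qed
  have inj: "p x = p y \<Longrightarrow> x = y" for x y using pp by metis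
  have out: "x \<notin> {1..m} \<Longrightarrow> p x = x" for x using pm by (simp add: permutes_not_in)
  have inr: "x \<in> {1..m} \<Longrightarrow> p x \<in> {1..m}" for x using permutes_in_image[OF pm, of x] by blast
  have fin: "finite (descents m p)" unfolding descents_def by (rule finite_subset[of _ "{..<m}"]) auto
  show ?thesis
  proof (cases "descents m p = {}")
    case True
    have im: "incr_on 1 m p"
    proof (rule incr_onI)
      fix i assume "1 \<le> i" "i < m"
      then have "\<not> p i > p (Suc i)" using True unfolding descents_def by blast
      moreover have "p i \<noteq> p (Suc i)" using inj by fastforce
      ultimately show "p i < p (Suc i)" by simp
    qed
    have "p i = i" for i
    proof (cases "i \<in> {1..m}")
      case True
      have "1 + (i - 1) \<le> p i" by (rule incr_lower[OF im]) (use inr True in auto)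
      moreover have "p i + (m - i) \<le> m" by (rule incr_upper[OF im]) (use inr True in auto)
      ultimately show ?thesis using True by auto
    next
      case False then show ?thesis using out by simp
    qed
    then have "p = sw 0 0" by (auto simp: sw_def)
    then show ?thesis by (rule_tac x=0 in exI, rule_tac x=0 in exI) simp
  next
    case False
    then obtain d where dD: "d \<in> descents m p" by blast
    have uniq: "i = d" if "i \<in> descents m p" for i
      using g fin dD that unfolding grassmannian_def by (metis card_le_Suc0_iff_eq One_nat_def)
    have d1: "1 \<le> d" "d < m" "p (Suc d) < p d" using dD unfolding descents_def by auto
    have step: "p i < p (Suc i)" if "1 \<le> i" "i < m" "i \<noteq> d" for i
    proof -
      have "i \<notin> descents m p" using uniq that by blast
      then have "\<not> p i > p (Suc i)" using that unfolding descents_def by blast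
      moreover have "p i \<noteq> p (Suc i)" using inj by fastforce
      ultimately show "p i < p (Suc i)" by simp
    qed
    have m1: "incr_on 1 d p" by (rule incr_onI) (use step d1 in auto)
    have m2: "incr_on (Suc d) m p" by (rule incr_onI) (use step d1 in auto)
    have M1: "p i < p j" if "1 \<le> i" "i < j" "j \<le> d" for i j using m1 that unfolding incr_on_def by blast
    have M2: "p i < p j" if "Suc d \<le> i" "i < j" "j \<le> m" for i j using m2 that unfolding incr_on_def by blast
    define c where "c = p d"
    define a1 where "a1 = p (Suc d)"
    have pc: "p c = d" using pp c_def by simp
    have pa1: "p a1 = Suc d" using pp a1_def by simp
    have crange: "c \<in> {1..m}" using inr d1 c_def by auto
    have a1range: "a1 \<in> {1..m}" using inr d1 a1_def by auto
    have cd: "Suc d \<le> c"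
    proof (rule ccontr)
      assume "\<not> Suc d \<le> c"
      then have "a1 < c" "c \<le> d" using d1 a1_def c_def by auto
      then have "p a1 < p c" using M1 a1range by auto
      then show False using pc pa1 by simp
    qed
    have a1d: "a1 \<le> d"
    proof (rule ccontr)
      assume "\<not> a1 \<le> d"
      then have "a1 < c" "Suc d \<le> a1" "c \<le> m" using d1 a1_def c_def crange by auto
      then have "p a1 < p c" using M2 by auto
      then show False using pc pa1 by simp
    qed
    define a where "a = a1 - 1"
    have a1a: "a1 = Suc a" using a1range a_def by auto
    have ad: "a < d" using a1d a1a by simp
    have P1: "Suc d \<le> p i \<and> p i \<le> c" if "Suc a \<le> i" "i \<le> d" for i
    proof
      show "Suc d \<le> p i"
      proof (cases "i = Suc a")
        case True then show ?thesis using pa1 a1a by simp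
      next
        case False then have "p (Suc a) < p i" using M1 that by auto
        then show ?thesis using pa1 a1a by simp
      qed
      show "p i \<le> c"
      proof (cases "i = d")
        case True then show ?thesis using c_def by simp
      next
        case False then have "p i < p d" using M1 that by auto
        then show ?thesis using c_def by simp
      qed
    qed
    have P2: "Suc a \<le> p j \<and> p j \<le> d" if "Suc d \<le> j" "j \<le> c" for j
    proof
      show "Suc a \<le> p j"
      proof (cases "j = Suc d")
        case True then show ?thesis using a1_def a1a by simp
      next
        case False then have "p (Suc d) < p j" using M2 that crange by auto
        then show ?thesis using a1_def a1a by simp
      qed
      show "p j \<le> d"
      proof (cases "j = c")
        case True then show ?thesis using pc by simp
      next
        case False then have "p j < p c" using M2 that crange by auto
        then show ?thesis using pc by simp
      qed
    qed
    have m1': "incr_on (Suc a) d p" using M1 unfolding incr_on_def by auto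
    have m2': "incr_on (Suc d) c p" using M2 crange unfolding incr_on_def by auto
    have e1: "Suc d + (d - Suc a) \<le> p d" by (rule incr_lower[OF m1']) (use P1 ad in auto)
    have e2: "Suc a + (c - Suc d) \<le> p c" by (rule incr_lower[OF m2']) (use P2 cd in auto)
    define b where "b = d - a"
    have cdb: "c = d + b" using e1 e2 c_def pc b_def ad cd by simp
    have blk1: "p i = i + b" if "Suc a \<le> i" "i \<le> d" for i
    proof -
      have "Suc d + (i - Suc a) \<le> p i" by (rule incr_lower[OF m1']) (use P1 that in auto)
      moreover have "p i + (d - i) \<le> c" by (rule incr_upper[OF m1']) (use P1 that in auto)
      ultimately show ?thesis using cdb b_def that ad by simp
    qed
    have blk2: "p j = j - b" if "Suc d \<le> j" "j \<le> c" for j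
    proof -
      have "Suc a + (j - Suc d) \<le> p j" by (rule incr_lower[OF m2']) (use P2 that in auto)
      moreover have "p j + (c - j) \<le> d" by (rule incr_upper[OF m2']) (use P2 that in auto)
      ultimately show ?thesis using cdb b_def that ad by simp
    qed
    have blk0: "p i = i" if "1 \<le> i" "i \<le> a" for i
    proof -
      have Q: "1 \<le> p i \<and> p i \<le> a" if "1 \<le> i" "i \<le> a" for i
      proof -
        have "p i < p (Suc a)" using M1 that ad by auto
        then have pid: "p i \<le> d" using pa1 a1a by simp
        have "1 \<le> p i" using inr that ad d1 by auto
        moreover have "p i \<le> a"
        proof (rule ccontr)
          assume "\<not> p i \<le> a"
          then have "p (p i) = p i + b" using blk1 pid by simp
          then show False using pp that \<open>\<not> p i \<le> a\<close> by simp
        qed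
        ultimately show ?thesis by simp
      qed
      have m0: "incr_on 1 a p" using M1 ad unfolding incr_on_def by auto
      have "1 + (i - 1) \<le> p i" by (rule incr_lower[OF m0]) (use Q that in auto)
      moreover have "p i + (a - i) \<le> a" by (rule incr_upper[OF m0]) (use Q that in auto)
      ultimately show ?thesis using that by simp
    qed
    have blk3: "p j = j" if "Suc c \<le> j" "j \<le> m" for j
    proof -
      have Q: "Suc c \<le> p j \<and> p j \<le> m" if "Suc c \<le> j" "j \<le> m" for j
      proof -
        have "p c < p j" using M2 that cd by auto
        then have pjd: "d < p j" using pc by simp
        have "p j \<le> m" using inr that cd by auto
        moreover have "Suc c \<le> p j"
        proof (rule ccontr)
          assume "\<not> Suc c \<le> p j"
          then have "p (p j) = p j - b" using blk2 pjd by simp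
          then show False using pp that \<open>\<not> Suc c \<le> p j\<close> cdb by simp
        qed
        ultimately show ?thesis by simp
      qed
      have m3: "incr_on (Suc c) m p" using M2 cd unfolding incr_on_def by auto
      have "Suc c + (j - Suc c) \<le> p j" by (rule incr_lower[OF m3]) (use Q that in auto)
      moreover have "p j + (m - j) \<le> m" by (rule incr_upper[OF m3]) (use Q that in auto)
      ultimately show ?thesis using that by simp
    qed
    have dab: "d = a + b" using b_def ad by simp
    have cab: "c = a + 2*b" using dab cdb by simp
    have "p = sw a b"
    proof
      fix i
      consider "i \<notin> {1..m}" | "1 \<le> i \<and> i \<le> a" | "Suc a \<le> i \<and> i \<le> d"
        | "Suc d \<le> i \<and> i \<le> c" | "Suc c \<le> i \<and> i \<le> m" by force
      then show "p i = sw a b i"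
      proof cases
        case 1 then show ?thesis using out sw_out[of a b m i] cab crange by auto
      next
        case 2 then show ?thesis using blk0[of i] unfolding sw_def by auto
      next
        case 3 then show ?thesis using blk1[of i] dab unfolding sw_def by auto
      next
        case 4 then show ?thesis using blk2[of i] dab cab unfolding sw_def by auto
      next
        case 5 then show ?thesis using blk3[of i] cab unfolding sw_def by auto
      qed
    qed
    then show ?thesis using cab crange by auto
  qed
qed

lemma sw_inj:
  assumes "1 \<le> b" "1 \<le> b'" "sw a b = sw a' b'"
  shows "a = a' \<and> b = b'"
proof -
  have e: "sw a b (Suc a) = sw a' b' (Suc a)" "sw a b (Suc a') = sw a' b' (Suc a')"
    using assms(3) by simp_all
  have "a = a'"
  proof (rule ccontr)
    assume "a \<noteq> a'"
    then show False using e assms(1,2) unfolding sw_def by (auto split: if_splits)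
  qed
  then show ?thesis using e assms unfolding sw_def by auto
qed

lemma sq_step: "((x::nat)+1)^2 div 4 = x^2 div 4 + (x+1) div 2"
proof -
  obtain r where "x = 2*r \<or> x = 2*r+1" by (metis dvd_mult_div_cancel odd_two_times_div_two_succ)
  then show ?thesis
  proof
    assume x: "x = 2*r"
    have "(x+1)^2 = 4*(r*r+r) + 1" "x^2 = 4*(r*r)" using x by (simp_all add: power2_eq_square algebra_simps)
    then show ?thesis using x by simp
  next
    assume x: "x = 2*r+1"
    have "(x+1)^2 = 4*((r+1)*(r+1))" "x^2 = 4*(r*r+r) + 1" using x by (simp_all add: power2_eq_square algebra_simps)
    then show ?thesis using x by (simp add: algebra_simps)
  qed
qed

lemma card_pairs:
  "card {(a,b). t \<le> b \<and> a + 2*b \<le> (M::nat)} = (M + 2 - 2*t)^2 div 4"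
proof (induction M)
  case 0
  show ?case
  proof (cases "t = 0")
    case True
    then have "{(a,b). t \<le> b \<and> a + 2*b \<le> (0::nat)} = {(0,0)}" by auto
    then show ?thesis using True by (simp add: power2_eq_square)
  next
    case False
    then have e1: "{(a,b). t \<le> b \<and> a + 2*b \<le> (0::nat)} = {}" by auto
    have e2: "2 - 2*t = 0" using False by simp
    show ?thesis by (simp only: e1 card.empty add_0 e2) simp
  qed
next
  case (Suc M)
  define A where "A = {(a,b). t \<le> b \<and> a + 2*b \<le> M}"
  define L where "L = (\<lambda>b. (Suc M - 2*b, b)) ` {t..Suc M div 2}"
  have split: "{(a,b). t \<le> b \<and> a + 2*b \<le> Suc M} = A \<union> L"
  proof
    show "{(a,b). t \<le> b \<and> a + 2*b \<le> Suc M} \<subseteq> A \<union> L"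
    proof clarify
      fix a b assume h: "t \<le> b" "a + 2*b \<le> Suc M" "(a,b) \<notin> L"
      show "(a,b) \<in> A"
      proof (rule ccontr)
        assume "(a,b) \<notin> A"
        then have "a + 2*b = Suc M" using h A_def by auto
        then have "a = Suc M - 2*b" "b \<in> {t..Suc M div 2}" using h by auto
        then have "(a,b) \<in> L" unfolding L_def by auto
        then show False using h by simp
      qed
    qed
    show "A \<union> L \<subseteq> {(a,b). t \<le> b \<and> a + 2*b \<le> Suc M}"
      unfolding A_def L_def by auto
  qed
  have disj: "A \<inter> L = {}" unfolding A_def L_def by auto
  have finA: "finite A"
    by (rule finite_subset[of _ "{..M} \<times> {..M}"]) (auto simp: A_def)
  have finL: "finite L" unfolding L_def by simp
  have cL: "card L = Suc (Suc M div 2) - t" unfolding L_def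
    by (subst card_image) (auto simp: inj_on_def)
  have "card {(a,b). t \<le> b \<and> a + 2*b \<le> Suc M} = card A + card L"
    using split disj finA finL by (simp add: card_Un_disjoint)
  also have "card A = (M + 2 - 2*t)^2 div 4" using Suc A_def by simp
  finally have eq: "card {(a,b). t \<le> b \<and> a + 2*b \<le> Suc M} = (M + 2 - 2*t)^2 div 4 + (Suc (Suc M div 2) - t)"
    using cL by simp
  show ?case
  proof (cases "2*t \<le> M + 2")
    case True
    define x where "x = M + 2 - 2*t"
    have "Suc M + 2 - 2*t = x + 1" using True x_def by simp
    moreover have "Suc (Suc M div 2) - t = (x+1) div 2" using True x_def by simp
    ultimately show ?thesis using eq sq_step[of x] x_def by simp
  next
    case False
    then have "Suc M + 2 - 2*t = 0" "M + 2 - 2*t = 0" "Suc (Suc M div 2) - t = 0" by auto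
    then show ?thesis using eq by simp
  qed
qed

theorem mainTheorem18:
  fixes k m :: nat
  assumes "k \<ge> 1" and "k \<le> m" and "m < 2 * k"
  shows "card {p. p permutes {1..m} \<and> grassmannian m p \<and> involution p \<and> avoids_incr m k p}
           = (2 * k - m)^2 div 4"
proof -
  let ?S = "{p. p permutes {1..m} \<and> grassmannian m p \<and> involution p \<and> avoids_incr m k p}"
  let ?I = "{(a,b). m - k + 1 \<le> b \<and> a + 2*b \<le> m}"
  have eq: "?S = (\<lambda>(a,b). sw a b) ` ?I"
  proof
    show "?S \<subseteq> (\<lambda>(a,b). sw a b) ` ?I"
    proof
      fix p assume "p \<in> ?S"
      then have h: "p permutes {1..m}" "grassmannian m p" "involution p" "avoids_incr m k p" by auto
      obtain a b where ab: "a + 2*b \<le> m" "p = sw a b" using char h(1-3) by blast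
      have "\<not> k + b \<le> m" using sw_contains[of k b m a] ab h(4) unfolding avoids_incr_def by blast
      then have "m - k + 1 \<le> b" using assms(2) by linarith
      then show "p \<in> (\<lambda>(a,b). sw a b) ` ?I" using ab by auto
    qed
    show "(\<lambda>(a,b). sw a b) ` ?I \<subseteq> ?S"
    proof
      fix p assume "p \<in> (\<lambda>(a,b). sw a b) ` ?I"
      then obtain a b where ab: "m - k + 1 \<le> b" "a + 2*b \<le> m" "p = sw a b" by auto
      have "\<not> contains_incr m k (sw a b)"
      proof
        assume "contains_incr m k (sw a b)"
        then have "k + b \<le> m" by (rule sw_avoid[OF ab(2)])
        then show False using ab(1) assms(2) by linarith
      qed
      then have "avoids_incr m k p" unfolding avoids_incr_def using ab(3) by simp
      moreover have "p permutes {1..m}" using sw_permutes[OF ab(2)] ab(3) by simp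
      moreover have "grassmannian m p" using sw_grass ab(3) by simp
      moreover have "involution p" using sw_inv ab(3) unfolding involution_def by simp
      ultimately show "p \<in> ?S" by simp
    qed
  qed
  have inj: "inj_on (\<lambda>(a,b). sw a b) ?I"
  proof (rule inj_onI)
    fix x y assume h: "x \<in> ?I" "y \<in> ?I" "(\<lambda>(a,b). sw a b) x = (\<lambda>(a,b). sw a b) y"
    obtain a b where x: "x = (a,b)" by (cases x)
    obtain a' b' where y: "y = (a',b')" by (cases y)
    have "1 \<le> b" "1 \<le> b'" "sw a b = sw a' b'" using h x y by auto
    then have "a = a' \<and> b = b'" by (rule sw_inj)
    then show "x = y" using x y by simp
  qed
  have "card ?S = card ?I" unfolding eq using card_image[OF inj] .
  also have "\<dots> = (m + 2 - 2*(m-k+1))^2 div 4" by (rule card_pairs)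
  also have "m + 2 - 2*(m-k+1) = 2*k - m" using assms by simp
  finally show ?thesis .
qed

end
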